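(* Let $m\ge1$ and let $F=(F_0,F_1,F_2)$ be a gapset filtration of multiplicity $m+1$ and depth $3$, so that $F_0=[1,m]\supseteq F_1\supseteq F_2\neq\emptyset$. Let $a_i=\max F_i$ and $F'_i=F_i\setminus\{a_i\}$ for $i=0,1,2$. Then $F'=(F'_0,F'_1,F'_2)$ is a gapset filtration (of multiplicity $m$), i.e. $[1,m-1]\cup(m+F'_1)\cup(2m+F'_2)$ is a gapset.
   Context: A gapset is a finite set $G \subset \mathbb{N}_+$ such that for all $z \in G$, whenever $z=x+y$ with $x,y\in\mathbb{N}_+$, we have $x\in G$ or $y\in G$. Its multiplicity is the least $m\ge1$ with $m\notin G$, and its depth is $\lceil c/m\rceil$ where $c=\max G+1$. For $k\ge1$, a $k$-filtration is a sequence $(F_0,\dots,F_t)$ with $F_0=[1,k-1]\supseteq F_1\supseteq\dots\supseteq F_t$; it is a gapset filtration if $\bigcup_i(ik+F_i)$ is a gapset, and its multiplicity and depth are those of that gapset. Here $j+A=\{j+a:a\in A\}$. *)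

theory Defs
  imports Main
begin

definition gapset :: "nat set \<Rightarrow> bool" where
  "gapset G \<longleftrightarrow> finite G \<and> 0 \<notin> G \<and>
     (\<forall>z\<in>G. \<forall>x y. 0 < x \<and> 0 < y \<and> z = x + y \<longrightarrow> x \<in> G \<or> y \<in> G)"

definition multiplicity_gs :: "nat set \<Rightarrow> nat" where
  "multiplicity_gs G = (LEAST m. 1 \<le> m \<and> m \<notin> G)"

text \<open>Conductor c = max G + 1 (with the convention c = 1 for the empty set),
  depth = ceiling (c / m), computed as (c + m - 1) div m (m >= 1).\<close>
definition conductor_gs :: "nat set \<Rightarrow> nat" where
  "conductor_gs G = (if G = {} then 1 else Max G + 1)"

definition depth_gs :: "nat set \<Rightarrow> nat" where
  "depth_gs G = (conductor_gs G + multiplicity_gs G - 1) div multiplicity_gs G"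

definition k_filtration :: "nat \<Rightarrow> nat set list \<Rightarrow> bool" where
  "k_filtration k Fs \<longleftrightarrow> Fs \<noteq> [] \<and> Fs ! 0 = {1..k-1} \<and>
     (\<forall>i. Suc i < length Fs \<longrightarrow> Fs ! Suc i \<subseteq> Fs ! i)"

definition filtration_set :: "nat \<Rightarrow> nat set list \<Rightarrow> nat set" where
  "filtration_set k Fs = (\<Union>i<length Fs. (\<lambda>a. i * k + a) ` (Fs ! i))"

definition gapset_filtration :: "nat \<Rightarrow> nat set list \<Rightarrow> bool" where
  "gapset_filtration k Fs \<longleftrightarrow> k_filtration k Fs \<and> gapset (filtration_set k Fs)"

end

theory Submission
  imports Defs
begin

lemma fs3: "filtration_set k [A, B, C] = A \<union> (\<lambda>a. k + a) ` B \<union> (\<lambda>a. 2 * k + a) ` C"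
proof -
  have "{..<length [A,B,C]} = {0,1,2::nat}" by auto
  then show ?thesis unfolding filtration_set_def by (simp add: Un_assoc)
qed

lemma key_aux:
  assumes gs: "gapset G" and G: "G = A \<union> (\<lambda>a. k + a) ` B \<union> (\<lambda>a. 2*k + a) ` C"
    and f: "f \<in> C" and uv: "u + v = f" and A: "\<forall>a\<in>A. a < k" and C0: "0 \<notin> C"
    and u: "u < k" and v: "v < k"
  shows "u \<in> B \<or> v \<in> B"
proof -
  have k0: "0 < k" using u by simp
  have gsG: "\<forall>z\<in>G. \<forall>x y. 0 < x \<and> 0 < y \<and> z = x + y \<longrightarrow> x \<in> G \<or> y \<in> G"
    using gs unfolding gapset_def by blast
  have zG: "2*k + f \<in> G" unfolding G using f by blast
  have eq: "2*k + f = (k+u) + (k+v)" using uv by simp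
  have "k+u \<in> G \<or> k+v \<in> G" using gsG zG eq k0 by auto
  moreover have "w \<in> B" if w1: "k+w \<in> G" and w2: "w < k" for w
  proof -
    have "k+w \<notin> A" using A by auto
    moreover have "k+w \<notin> (\<lambda>a. 2 * k + a) ` C" using C0 w2 by auto
    ultimately have "k+w \<in> (\<lambda>a. k + a) ` B" using w1 unfolding G by blast
    then show ?thesis by auto
  qed
  ultimately show ?thesis using u v by blast
qed

theorem mainTheorem14:
  fixes m :: nat and F0 F1 F2 :: "nat set"
  assumes "1 \<le> m"
    and "gapset_filtration (m + 1) [F0, F1, F2]"
    and "multiplicity_gs (filtration_set (m + 1) [F0, F1, F2]) = m + 1"
    and "depth_gs (filtration_set (m + 1) [F0, F1, F2]) = 3"
  shows "gapset_filtration m [F0 - {Max F0}, F1 - {Max F1}, F2 - {Max F2}]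
    \<and> multiplicity_gs (filtration_set m [F0 - {Max F0}, F1 - {Max F1}, F2 - {Max F2}]) = m"
proof -
  have kf: "k_filtration (m+1) [F0, F1, F2]" and gs: "gapset (filtration_set (m + 1) [F0, F1, F2])"
    using assms(2) unfolding gapset_filtration_def by auto
  have F0: "F0 = {1..m}" using kf unfolding k_filtration_def by simp
  have kfa: "\<forall>i. Suc i < length [F0, F1, F2] \<longrightarrow> [F0, F1, F2] ! Suc i \<subseteq> [F0, F1, F2] ! i"
    using kf unfolding k_filtration_def by blast
  have s10: "F1 \<subseteq> F0" using kfa[rule_format, of 0] by simp
  have s21: "F2 \<subseteq> F1" using kfa[rule_format, of 1] by simp
  have M0: "Max F0 = m" using F0 assms(1) by (simp add: Max_eq_iff)
  have fin1: "finite F1" using s10 F0 finite_subset by blast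
  have fin2: "finite F2" using s21 fin1 finite_subset by blast
  define G where "G = filtration_set (m + 1) [F0, F1, F2]"
  have G: "G = F0 \<union> (\<lambda>a. (m+1) + a) ` F1 \<union> (\<lambda>a. 2 * (m+1) + a) ` F2"
    unfolding G_def fs3 ..
  define F1' where "F1' = F1 - {Max F1}"
  define F2' where "F2' = F2 - {Max F2}"
  have F1'b: "F1' \<subseteq> {1..m-1}"
  proof
    fix x assume x: "x \<in> F1'"
    then have x1: "x \<in> F1" and x2: "x \<noteq> Max F1" unfolding F1'_def by auto
    have x3: "x \<le> Max F1" using fin1 x1 by simp
    have x4: "x \<in> {1..m}" using x1 s10 F0 by blast
    have "Max F1 \<in> F1" using fin1 x1 by (intro Max_in) auto
    then have "Max F1 \<le> m" using s10 F0 by auto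
    then show "x \<in> {1..m-1}" using x2 x3 x4 by simp
  qed
  have F21': "F2' \<subseteq> F1'"
  proof
    fix x assume x: "x \<in> F2'"
    then have x1: "x \<in> F2" and x2: "x \<noteq> Max F2" unfolding F2'_def by auto
    have x3: "x \<le> Max F2" using fin2 x1 by simp
    have "Max F2 \<in> F2" using fin2 x1 by (intro Max_in) auto
    then have "Max F2 \<le> Max F1" using fin1 s21 by auto
    then have "x \<noteq> Max F1" using x2 x3 by simp
    then show "x \<in> F1'" unfolding F1'_def using s21 x1 by blast
  qed
  have z2: "0 \<notin> F2" using s21 s10 F0 by auto
  have z1: "0 \<notin> F1" using s10 F0 by auto
  have gsG: "gapset G" using gs unfolding G_def .
  have A0: "\<forall>a\<in>F0. a < m + 1" using F0 by auto
  have key: "u \<in> F1 \<or> v \<in> F1" if k1: "f \<in> F2" and k2: "u + v = f" for f u v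
  proof -
    have fm: "f \<in> {1..m}" using k1 s21 s10 F0 by blast
    have u: "u < m + 1" and v: "v < m + 1" using fm k2 by auto
    show ?thesis using key_aux[OF gsG G k1 k2 A0 z2 u v] .
  qed
  define G' where "G' = {1..m-1} \<union> (\<lambda>a. m + a) ` F1' \<union> (\<lambda>a. 2 * m + a) ` F2'"
  have "F0 - {Max F0} = F0 - {m}" by (simp only: M0)
  also have "\<dots> = {1..m-1}" unfolding F0 by auto
  finally have F0': "F0 - {Max F0} = {1..m-1}" .
  have G'eq: "filtration_set m [F0 - {Max F0}, F1 - {Max F1}, F2 - {Max F2}] = G'"
    using F0' unfolding fs3 G'_def F1'_def F2'_def by simp
  have kf': "k_filtration m [F0 - {Max F0}, F1 - {Max F1}, F2 - {Max F2}]"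
    unfolding k_filtration_def
  proof (intro conjI allI impI)
    show "[F0 - {Max F0}, F1 - {Max F1}, F2 - {Max F2}] ! 0 = {1..m - 1}" using F0' by simp
    fix i assume "Suc i < length [F0 - {Max F0}, F1 - {Max F1}, F2 - {Max F2}]"
    then have "i = 0 \<or> i = 1" by auto
    then show "[F0 - {Max F0}, F1 - {Max F1}, F2 - {Max F2}] ! Suc i
       \<subseteq> [F0 - {Max F0}, F1 - {Max F1}, F2 - {Max F2}] ! i"
    proof
      assume "i = 0" then show ?thesis using F1'b F0' unfolding F1'_def by simp
    next
      assume "i = 1" then show ?thesis using F21' unfolding F1'_def F2'_def by simp
    qed
  qed simp
  have mnot: "m \<notin> G'" using F1'b assms(1) unfolding G'_def by auto
  have gs': "gapset G'"
    unfolding gapset_def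
  proof (intro conjI ballI allI impI)
    show "finite G'" unfolding G'_def F1'_def F2'_def using fin1 fin2 by auto
    show "0 \<notin> G'" using assms(1) unfolding G'_def by auto
    fix z x y assume z: "z \<in> G'" and xy: "0 < x \<and> 0 < y \<and> z = x + y"
    show "x \<in> G' \<or> y \<in> G'"
    proof (cases "x < m \<or> y < m")
      case True then show ?thesis using xy unfolding G'_def by auto
    next
      case False
      then obtain u v where uv: "x = m + u" "y = m + v" by (metis le_Suc_ex not_less)
      have "z \<in> {1..m-1} \<or> (\<exists>f\<in>F1'. z = m + f) \<or> (\<exists>f\<in>F2'. z = 2 * m + f)"
        using z unfolding G'_def by blast
      then show ?thesis
      proof (elim disjE bexE)
        assume "z \<in> {1..m-1}" then show ?thesis using uv xy by auto
      next
        fix f assume "f \<in> F1'" "z = m + f" then show ?thesis using F1'b uv xy by auto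
      next
        fix f assume f: "f \<in> F2'" and zf: "z = 2 * m + f"
        have uvf: "u + v = f" using zf uv xy by simp
        have fF2: "f \<in> F2" using f unfolding F2'_def by simp
        have fF1': "f \<in> F1'" using f F21' by auto
        have fM: "f < Max F1" using fF1' fin1 unfolding F1'_def
          by (metis DiffD1 DiffD2 Max_ge insertI1 le_neq_implies_less)
        show ?thesis
        proof (cases "u = 0 \<or> v = 0")
          case True
          then show ?thesis using uvf fF1' uv unfolding G'_def by auto
        next
          case False
          have "u \<in> F1 \<or> v \<in> F1" using key[OF fF2 uvf] .
          moreover have "u < Max F1" "v < Max F1" using False uvf fM by auto
          ultimately have "u \<in> F1' \<or> v \<in> F1'" unfolding F1'_def by auto
          then show ?thesis using uv unfolding G'_def by auto
        qed
      qed
    qed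
  qed
  have mult: "multiplicity_gs G' = m"
    unfolding multiplicity_gs_def
  proof (rule Least_equality)
    show "1 \<le> m \<and> m \<notin> G'" using assms(1) mnot by simp
    fix n assume "1 \<le> n \<and> n \<notin> G'"
    then show "m \<le> n" unfolding G'_def by (cases "n < m") auto
  qed
  show ?thesis using kf' gs' mult G'eq unfolding gapset_filtration_def by simp
qed

end
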